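(* Let $T$ and $U$ be session types with $\Delta\vdash T:\mathsf{s}^m$ and $\Delta\vdash U:\mathsf{s}^m$ satisfying the standing assumptions below. Then $T$ and $U$ are type bisimilar ($T\simeq U$) if and only if the BPA processes $\llbracket T\rrbracket$ and $\llbracket U\rrbracket$ are bisimilar with respect to some system of process equations $\mathcal{E}^*$ with $\mathcal{E}_{T\cdot U}\subseteq\mathcal{E}^*$.
   Context: Session types: $T ::= \mathsf{Skip} \mid {!}B \mid {?}B \mid \oplus\{\ell:T_\ell\}_{\ell\in L} \mid \&\{\ell:T_\ell\}_{\ell\in L} \mid T;T \mid \mu a{:}\kappa.T \mid a$, with kinding: $\mathsf{Skip}:\mathsf{s}^{\mathsf{un}}$; ${!}B,{?}B:\mathsf{s}^{\mathsf{lin}}$ for message types $B$; choices $:\mathsf{s}^{\mathsf{lin}}$ when all branches are; $T;U:\mathsf{s}^{\mathsf{lin}}$ when both are; $\mu a{:}\kappa.T:\kappa$ when $T$ contractive on $a$ and $\Delta,a{:}\kappa\vdash T:\kappa$; variables by lookup; subsumption. Terminated: $\mathsf{Skip}$; $T;U$ iff both terminated; $\mu a.T$ iff $T$ terminated. Contractive on $a$: $T\neq a$; for $T=U;V$, $U$ contractive on $a$ and if $U$ terminated then $V$ contractive on $a$; for $\mu b.T'$, $T'$ contractive on $a$. Standing assumptions: every $\mu$-bound variable occurs free in its body; $T$ and $U$ are $\alpha$-renamed to share no bound variables. Session-type LTS: ${!}B\xrightarrow{!B}\mathsf{Skip}$, ${?}B\xrightarrow{?B}\mathsf{Skip}$,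 $\star\{\ell:T_\ell\}\xrightarrow{\star k}T_k$, $b\xrightarrow{b}\mathsf{Skip}$ for free $b$; $\mu a.T\xrightarrow{\alpha}T'$ if $T[\mu a.T/a]\xrightarrow{\alpha}T'$; $T;U\xrightarrow{\alpha}T';U$ if $T\xrightarrow{\alpha}T'$; $T;U\xrightarrow{\alpha}U'$ if $T$ terminated and $U\xrightarrow{\alpha}U'$. Type bisimilarity $\simeq$ is the largest bisimulation on this LTS. BPA processes $p ::= \alpha \mid X \mid p+p \mid p\cdot p \mid \varepsilon$; LTS over equations $\mathcal E$: $\alpha\xrightarrow{\alpha}\varepsilon$; choice takes a transition of either summand; $p\cdot q\xrightarrow{\alpha}p'\cdot q$ if $p\xrightarrow{\alpha}p'\ne\varepsilon$; $p\cdot q\xrightarrow{\alpha}q$ if $p\xrightarrow{\alpha}\varepsilon$; $X\xrightarrow{\alpha}p'$ if $X\triangleq p\in\mathcal E$ and $p\xrightarrow{\alpha}p'$; BPA bisimilarity w.r.t. $\mathcal E$ is the largest bisimulation on it. Operator $\odot$: $p\odot\varepsilon=p$, $\varepsilon\odot q=q$, else $p\cdot q$. Translation (each $\mu$-subterm $\mu a_i.T_i$ gets a distinct variable $X_i$): $\llbracket\mathsf{Skip}\rrbracket=\varepsilon$, $\llbracket\sharp B\rrbracket=\sharp B$, $\llbracket\star\{\ell:T_\ell\}\rrbracket=\sum_\ell\star\ell\odot\llbracket T_\ell\rrbracket$, $\llbracket T;U\rrbracket=\llbracket T\rrbracket\odot\llbracket U\rrbracket$, $\llbracket b\rrbracket=b$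 for free $b$, $\llbracket a_i\rrbracket=\llbracket\mu a_i.T_i\rrbracket=X_i$. Unravel: $\mathrm{unr}_\sigma(T;U)=\mathrm{unr}_\sigma(U)$ if $\mathrm{unr}_\sigma(T)=\mathsf{Skip}$, else $\mathrm{unr}_\sigma(T);U$; $\mathrm{unr}_\sigma(\mu a.T)=\mathrm{unr}_{\sigma\circ[\mu a.T/a]}(T)$; $\mathrm{unr}_\sigma(T)=T$ otherwise. $\mathcal{E}_T=\{X_i\triangleq\llbracket\mathrm{unr}_{\mathrm{id}}(T_i)\rrbracket\}_i$ over the $\mu$-subterms of $T$, and $\mathcal{E}_{T\cdot U}=\mathcal E_T\cup\mathcal E_U$. *)

theory Defs
  imports Main
begin

datatype kind = KUn | KLin

text \<open>A choice {l : T_l}_{l in L} is represented by an association list of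
  (label, branch) pairs; the kinding relation requires the labels to be
  pairwise distinct and L nonempty.\<close>
datatype ('b, 'l, 'v) styp =
    SSkip
  | SOut 'b
  | SIn 'b
  | SInt "('l \<times> ('b, 'l, 'v) styp) list"
  | SExt "('l \<times> ('b, 'l, 'v) styp) list"
  | SSeq "('b, 'l, 'v) styp" "('b, 'l, 'v) styp"
  | SMu 'v kind "('b, 'l, 'v) styp"
  | SVar 'v

fun terminated :: "('b, 'l, 'v) styp \<Rightarrow> bool" where
  "terminated SSkip = True"
| "terminated (SSeq T U) = (terminated T \<and> terminated U)"
| "terminated (SMu a k T) = terminated T"
| "terminated _ = False"

fun contractive :: "'v \<Rightarrow> ('b, 'l, 'v) styp \<Rightarrow> bool" where
  "contractive a (SVar b) = (b \<noteq> a)"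
| "contractive a (SSeq U V) = (contractive a U \<and> (terminated U \<longrightarrow> contractive a V))"
| "contractive a (SMu b k T) = contractive a T"
| "contractive a _ = True"

inductive kinding :: "('v \<Rightarrow> kind option) \<Rightarrow> ('b, 'l, 'v) styp \<Rightarrow> kind \<Rightarrow> bool" where
  k_skip: "kinding \<Delta> SSkip KUn"
| k_out: "kinding \<Delta> (SOut B) KLin"
| k_in: "kinding \<Delta> (SIn B) KLin"
| k_int: "\<lbrakk>bs \<noteq> []; distinct (map fst bs); \<forall>(l, T) \<in> set bs. kinding \<Delta> T KLin\<rbrakk>
          \<Longrightarrow> kinding \<Delta> (SInt bs) KLin"
| k_ext: "\<lbrakk>bs \<noteq> []; distinct (map fst bs); \<forall>(l, T) \<in> set bs. kinding \<Delta> T KLin\<rbrakk>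
          \<Longrightarrow> kinding \<Delta> (SExt bs) KLin"
| k_seq: "\<lbrakk>kinding \<Delta> T KLin; kinding \<Delta> U KLin\<rbrakk> \<Longrightarrow> kinding \<Delta> (SSeq T U) KLin"
| k_mu: "\<lbrakk>contractive a T; kinding (\<Delta>(a \<mapsto> \<kappa>)) T \<kappa>\<rbrakk> \<Longrightarrow> kinding \<Delta> (SMu a \<kappa> T) \<kappa>"
| k_var: "\<Delta> a = Some \<kappa> \<Longrightarrow> kinding \<Delta> (SVar a) \<kappa>"
| k_sub: "kinding \<Delta> T KUn \<Longrightarrow> kinding \<Delta> T KLin"

fun fv :: "('b, 'l, 'v) styp \<Rightarrow> 'v set" where
  "fv (SVar b) = {b}"
| "fv (SMu a k T) = fv T - {a}"
| "fv (SSeq T U) = fv T \<union> fv U"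
| "fv (SInt bs) = (\<Union>p \<in> set bs. fv (snd p))"
| "fv (SExt bs) = (\<Union>p \<in> set bs. fv (snd p))"
| "fv _ = {}"

fun binders :: "('b, 'l, 'v) styp \<Rightarrow> 'v list" where
  "binders (SMu a k T) = a # binders T"
| "binders (SSeq T U) = binders T @ binders U"
| "binders (SInt bs) = concat (map (\<lambda>p. binders (snd p)) bs)"
| "binders (SExt bs) = concat (map (\<lambda>p. binders (snd p)) bs)"
| "binders _ = []"

fun mus :: "('b, 'l, 'v) styp \<Rightarrow> ('v \<times> ('b, 'l, 'v) styp) set" where
  "mus (SMu a k T) = insert (a, T) (mus T)"
| "mus (SSeq T U) = mus T \<union> mus U"
| "mus (SInt bs) = (\<Union>p \<in> set bs. mus (snd p))"
| "mus (SExt bs) = (\<Union>p \<in> set bs. mus (snd p))"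
| "mus _ = {}"

text \<open>Substitution T[S/a] (no renaming needed under the standing assumptions).\<close>
fun subst :: "'v \<Rightarrow> ('b, 'l, 'v) styp \<Rightarrow> ('b, 'l, 'v) styp \<Rightarrow> ('b, 'l, 'v) styp" where
  "subst a S (SVar b) = (if b = a then S else SVar b)"
| "subst a S (SMu b k T) = (if b = a then SMu b k T else SMu b k (subst a S T))"
| "subst a S (SSeq T U) = SSeq (subst a S T) (subst a S U)"
| "subst a S (SInt bs) = SInt (map (\<lambda>p. (fst p, subst a S (snd p))) bs)"
| "subst a S (SExt bs) = SExt (map (\<lambda>p. (fst p, subst a S (snd p))) bs)"
| "subst a S T = T"

text \<open>Actions (shared by the session-type LTS and the BPA LTS).\<close>
datatype ('b, 'l, 'v) act = ASend 'b | ARecv 'b | AInt 'l | AExt 'l | AVar 'v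

inductive sstep :: "('b, 'l, 'v) styp \<Rightarrow> ('b, 'l, 'v) act \<Rightarrow> ('b, 'l, 'v) styp \<Rightarrow> bool" where
  s_out: "sstep (SOut B) (ASend B) SSkip"
| s_in: "sstep (SIn B) (ARecv B) SSkip"
| s_int: "(k, T) \<in> set bs \<Longrightarrow> sstep (SInt bs) (AInt k) T"
| s_ext: "(k, T) \<in> set bs \<Longrightarrow> sstep (SExt bs) (AExt k) T"
| s_var: "sstep (SVar b) (AVar b) SSkip"
| s_mu: "sstep (subst a (SMu a k T) T) \<alpha> T' \<Longrightarrow> sstep (SMu a k T) \<alpha> T'"
| s_seq1: "sstep T \<alpha> T' \<Longrightarrow> sstep (SSeq T U) \<alpha> (SSeq T' U)"
| s_seq2: "\<lbrakk>terminated T; sstep U \<alpha> U'\<rbrakk> \<Longrightarrow> sstep (SSeq T U) \<alpha> U'"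

definition is_bisim :: "('s \<Rightarrow> 'a \<Rightarrow> 's \<Rightarrow> bool) \<Rightarrow> ('s \<times> 's) set \<Rightarrow> bool" where
  "is_bisim step R \<longleftrightarrow>
     (\<forall>(p, q) \<in> R.
        (\<forall>a p'. step p a p' \<longrightarrow> (\<exists>q'. step q a q' \<and> (p', q') \<in> R)) \<and>
        (\<forall>a q'. step q a q' \<longrightarrow> (\<exists>p'. step p a p' \<and> (p', q') \<in> R)))"

definition bisimilar :: "('s \<Rightarrow> 'a \<Rightarrow> 's \<Rightarrow> bool) \<Rightarrow> 's \<Rightarrow> 's \<Rightarrow> bool" where
  "bisimilar step p q \<longleftrightarrow> (\<exists>R. is_bisim step R \<and> (p, q) \<in> R)"

definition type_bisim :: "('b, 'l, 'v) styp \<Rightarrow> ('b, 'l, 'v) styp \<Rightarrow> bool" where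
  "type_bisim T U \<longleftrightarrow> bisimilar sstep T U"

datatype ('a, 'x) proc = PAct 'a | PVar 'x | PPlus "('a, 'x) proc" "('a, 'x) proc"
  | PSeq "('a, 'x) proc" "('a, 'x) proc" | PEps

text \<open>BPA LTS w.r.t. a system of equations E (each variable has at most one defining equation).\<close>
inductive bstep :: "('x \<Rightarrow> ('a, 'x) proc option) \<Rightarrow> ('a, 'x) proc \<Rightarrow> 'a \<Rightarrow> ('a, 'x) proc \<Rightarrow> bool"
  for E where
  b_act: "bstep E (PAct a) a PEps"
| b_plus1: "bstep E p a p' \<Longrightarrow> bstep E (PPlus p q) a p'"
| b_plus2: "bstep E q a q' \<Longrightarrow> bstep E (PPlus p q) a q'"
| b_seq1: "\<lbrakk>bstep E p a p'; p' \<noteq> PEps\<rbrakk> \<Longrightarrow> bstep E (PSeq p q) a (PSeq p' q)"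
| b_seq2: "bstep E p a PEps \<Longrightarrow> bstep E (PSeq p q) a q"
| b_var: "\<lbrakk>E X = Some p; bstep E p a p'\<rbrakk> \<Longrightarrow> bstep E (PVar X) a p'"

fun odot :: "('a, 'x) proc \<Rightarrow> ('a, 'x) proc \<Rightarrow> ('a, 'x) proc" where
  "odot p PEps = p"
| "odot PEps q = q"
| "odot p q = PSeq p q"

fun bsum :: "('a, 'x) proc list \<Rightarrow> ('a, 'x) proc" where
  "bsum [] = PEps"
| "bsum [p] = p"
| "bsum (p # ps) = PPlus p (bsum ps)"

text \<open>The process variable associated with the mu-subterm mu a_i.T_i is a_i itself
  (binders are pairwise distinct by the standing assumptions). V is the set of
  bound variables of T and U; a variable occurrence a in V translates to the
  process variable X_a, a free variable b translates to the action b.\<close>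
fun tr :: "'v set \<Rightarrow> ('b, 'l, 'v) styp \<Rightarrow> (('b, 'l, 'v) act, 'v) proc" where
  "tr V SSkip = PEps"
| "tr V (SOut B) = PAct (ASend B)"
| "tr V (SIn B) = PAct (ARecv B)"
| "tr V (SInt bs) = bsum (map (\<lambda>p. odot (PAct (AInt (fst p))) (tr V (snd p))) bs)"
| "tr V (SExt bs) = bsum (map (\<lambda>p. odot (PAct (AExt (fst p))) (tr V (snd p))) bs)"
| "tr V (SSeq T U) = odot (tr V T) (tr V U)"
| "tr V (SVar b) = (if b \<in> V then PVar b else PAct (AVar b))"
| "tr V (SMu a k T) = PVar a"

text \<open>Unravelling. The substitution index sigma of the paper is never applied by
  any defining clause, so it is omitted.\<close>
fun unr :: "('b, 'l, 'v) styp \<Rightarrow> ('b, 'l, 'v) styp" where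
  "unr (SSeq T U) = (if unr T = SSkip then unr U else SSeq (unr T) U)"
| "unr (SMu a k T) = unr T"
| "unr T = T"

definition eqs :: "'v set \<Rightarrow> ('b, 'l, 'v) styp \<Rightarrow> ('v \<times> (('b, 'l, 'v) act, 'v) proc) set" where
  "eqs V T = {(a, tr V (unr B)) | a B. (a, B) \<in> mus T}"

definition standing :: "('b, 'l, 'v) styp \<Rightarrow> ('b, 'l, 'v) styp \<Rightarrow> bool" where
  "standing T U \<longleftrightarrow>
     (\<forall>(a, B) \<in> mus T \<union> mus U. a \<in> fv B) \<and>
     distinct (binders T @ binders U) \<and>
     set (binders T @ binders U) \<inter> (fv T \<union> fv U) = {}"

end

theory Submission
  imports Defs
begin

fun cok :: "('b, 'l, 'v) styp \<Rightarrow> bool" where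
  "cok (SInt bs) = (bs \<noteq> [] \<and> (\<forall>p\<in>set bs. cok (snd p)))"
| "cok (SExt bs) = (bs \<noteq> [] \<and> (\<forall>p\<in>set bs. cok (snd p)))"
| "cok (SSeq T U) = (cok T \<and> cok U)"
| "cok (SMu a k T) = cok T"
| "cok _ = True"

fun hdm :: "('b, 'l, 'v) styp \<Rightarrow> nat" where
  "hdm (SMu a k T) = Suc (hdm T)"
| "hdm (SSeq T U) = (if terminated T then hdm T + hdm U else hdm T)"
| "hdm _ = 0"

lemma snds_snd: "snd p \<in> Basic_BNFs.snds p"
  by (cases p) simp

lemma tr_subst: "a \<in> V \<Longrightarrow> tr V S = PVar a \<Longrightarrow> tr V (subst a S Y) = tr V Y"
proof (induction Y)
  case (SInt x)
  have "\<And>p. p \<in> set x \<Longrightarrow> tr V (subst a S (snd p)) = tr V (snd p)"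
    using SInt snds_snd by blast
  then show ?case by (simp cong: map_cong)
next
  case (SExt x)
  have "\<And>p. p \<in> set x \<Longrightarrow> tr V (subst a S (snd p)) = tr V (snd p)"
    using SExt snds_snd by blast
  then show ?case by (simp cong: map_cong)
qed auto

lemma fv_subst: "fv (subst a S Y) \<subseteq> (fv Y - {a}) \<union> fv S"
proof (induction Y)
  case (SInt x)
  have "\<And>p. p \<in> set x \<Longrightarrow> fv (subst a S (snd p)) \<subseteq> (fv (snd p) - {a}) \<union> fv S"
    using SInt snds_snd by blast
  then show ?case by simp blast
next
  case (SExt x)
  have "\<And>p. p \<in> set x \<Longrightarrow> fv (subst a S (snd p)) \<subseteq> (fv (snd p) - {a}) \<union> fv S"
    using SExt snds_snd by blast
  then show ?case by simp blast
qed auto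

lemma fv_subst2: "fv Y - {a} \<subseteq> fv (subst a S Y)"
proof (induction Y)
  case (SInt x)
  have "\<And>p. p \<in> set x \<Longrightarrow> fv (snd p) - {a} \<subseteq> fv (subst a S (snd p))"
    using SInt snds_snd by blast
  then show ?case by simp blast
next
  case (SExt x)
  have "\<And>p. p \<in> set x \<Longrightarrow> fv (snd p) - {a} \<subseteq> fv (subst a S (snd p))"
    using SExt snds_snd by blast
  then show ?case by simp blast
qed auto

lemma cok_subst: "cok S \<Longrightarrow> cok Y \<Longrightarrow> cok (subst a S Y)"
proof (induction Y)
  case (SInt x)
  have "\<And>p. p \<in> set x \<Longrightarrow> cok (subst a S (snd p))"
    using SInt snds_snd by simp blast
  then show ?case using SInt.prems by simp
next
  case (SExt x)
  have "\<And>p. p \<in> set x \<Longrightarrow> cok (subst a S (snd p))"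
    using SExt snds_snd by simp blast
  then show ?case using SExt.prems by simp
qed auto

lemma mus_subst: "(c, Y) \<in> mus (subst a S Y0) \<Longrightarrow>
  (c, Y) \<in> mus Y0 \<or> (c, Y) \<in> mus S \<or> (\<exists>X. (c, X) \<in> mus Y0 \<and> c \<noteq> a \<and> Y = subst a S X)"
proof (induction Y0)
  case (SInt x)
  from SInt.prems obtain p where p: "p \<in> set x" "(c, Y) \<in> mus (subst a S (snd p))" by auto
  have "(c, Y) \<in> mus (snd p) \<or> (c, Y) \<in> mus S \<or> (\<exists>X. (c, X) \<in> mus (snd p) \<and> c \<noteq> a \<and> Y = subst a S X)"
    using SInt.IH[OF p(1) snds_snd p(2)] .
  then show ?case using p(1) by auto
next
  case (SExt x)
  from SExt.prems obtain p where p: "p \<in> set x" "(c, Y) \<in> mus (subst a S (snd p))" by auto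
  have "(c, Y) \<in> mus (snd p) \<or> (c, Y) \<in> mus S \<or> (\<exists>X. (c, X) \<in> mus (snd p) \<and> c \<noteq> a \<and> Y = subst a S X)"
    using SExt.IH[OF p(1) snds_snd p(2)] .
  then show ?case using p(1) by auto
next
  case (SMu b k T)
  then show ?case by (auto split: if_splits)
qed (auto split: if_splits)

lemma term_fv: "terminated Y \<Longrightarrow> fv Y = {}"
  by (induction Y) auto

lemma term_subst: "\<not> terminated S \<Longrightarrow> terminated (subst a S Y) = terminated Y"
  by (induction Y) auto

lemma contr_nofv: "c \<notin> fv Y \<Longrightarrow> (\<forall>(b, X) \<in> mus Y. contractive b X) \<Longrightarrow> contractive c Y"
  by (induction Y) auto

lemma contr_subst: "contractive c X \<Longrightarrow> c \<noteq> a \<Longrightarrow> contractive c S \<Longrightarrow> \<not> terminated S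
   \<Longrightarrow> contractive c (subst a S X)"
  by (induction X) (auto simp: term_subst)

lemma hdm_subst: "contractive a Y \<Longrightarrow> \<not> terminated S \<Longrightarrow> hdm (subst a S Y) = hdm Y"
  by (induction Y) (auto simp: term_subst)

lemma unr_skip: "(unr Y = SSkip) = terminated Y"
  by (induction Y rule: unr.induct) auto

lemma term_unr: "terminated (unr Y) = terminated Y"
  by (induction Y rule: unr.induct) (auto simp: unr_skip)

lemma cok_unr: "cok Y \<Longrightarrow> cok (unr Y)"
  by (induction Y rule: unr.induct) auto

lemma mus_unr: "mus (unr Y) \<subseteq> mus Y"
  by (induction Y rule: unr.induct) auto

lemma odot_eps: "(odot p q = PEps) = (p = PEps \<and> q = PEps)"
  by (cases "(p,q)" rule: odot.cases) auto

lemma odot_epsL[simp]: "odot PEps q = q"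
  by (cases q) auto

lemma bsum_eps: "ps \<noteq> [] \<Longrightarrow> (\<forall>p\<in>set ps. p \<noteq> PEps) \<Longrightarrow> bsum ps \<noteq> PEps"
  by (induction ps rule: bsum.induct) auto

lemma odot_act_ne: "odot (PAct a) q \<noteq> PEps"
  by (cases q) auto

lemma bsum_map_ne: "xs \<noteq> [] \<Longrightarrow> bsum (map (\<lambda>p. odot (PAct (f p)) (g p)) xs) \<noteq> PEps"
  by (induction xs rule: induct_list012) (auto simp: odot_act_ne)

lemma tr_noneps: "\<not> terminated Y \<Longrightarrow> cok Y \<Longrightarrow> tr V Y \<noteq> PEps"
  by (induction Y) (auto simp: odot_eps bsum_map_ne)

lemma tr_eps: "terminated Y \<Longrightarrow> mus Y = {} \<Longrightarrow> tr V Y = PEps"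
  by (induction Y) auto

lemma term_mus: "terminated Y \<Longrightarrow> (\<forall>(c, X) \<in> mus Y. c \<in> fv X) \<Longrightarrow> mus Y = {}"
  by (induction Y) (auto dest: term_fv)

inductive_cases plusE: "bstep E (PPlus p q) a r"
inductive_cases seqE: "bstep E (PSeq p q) a r"
inductive_cases varE: "bstep E (PVar X) a r"
inductive_cases actE: "bstep E (PAct b) a r"
inductive_cases epsE: "bstep E PEps a r"

lemma plus_step: "bstep E (PPlus p q) \<alpha> r \<longleftrightarrow> bstep E p \<alpha> r \<or> bstep E q \<alpha> r"
  by (auto elim: plusE intro: b_plus1 b_plus2)

lemma bsum_step: "ps \<noteq> [] \<Longrightarrow> bstep E (bsum ps) \<alpha> p' \<longleftrightarrow> (\<exists>q\<in>set ps. bstep E q \<alpha> p')"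
  by (induction ps rule: bsum.induct) (auto simp: plus_step)

lemma pvar_step: "bstep E (PVar X) \<alpha> p' \<longleftrightarrow> (\<exists>q. E X = Some q \<and> bstep E q \<alpha> p')"
  by (auto elim: varE intro: b_var)

lemma act_step: "bstep E (PAct a) \<alpha> p' \<longleftrightarrow> \<alpha> = a \<and> p' = PEps"
  by (auto elim: actE intro: b_act)

lemma eps_step: "\<not> bstep E PEps \<alpha> p'"
  by (auto elim: epsE)

lemma seq_step: "bstep E (PSeq p q) \<alpha> r \<longleftrightarrow>
   (\<exists>p'. bstep E p \<alpha> p' \<and> p' \<noteq> PEps \<and> r = PSeq p' q) \<or> (bstep E p \<alpha> PEps \<and> r = q)"
  by (auto elim: seqE intro: b_seq1 b_seq2)

lemma odot_seq: "p \<noteq> PEps \<Longrightarrow> q \<noteq> PEps \<Longrightarrow> odot p q = PSeq p q"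
  by (cases p; cases q) auto

lemma odot_step_cong:
  assumes h: "\<And>\<alpha> r. bstep E p \<alpha> r \<longleftrightarrow> bstep E p' \<alpha> r" and "p \<noteq> PEps" "p' \<noteq> PEps"
  shows "bstep E (odot p q) \<alpha> r \<longleftrightarrow> bstep E (odot p' q) \<alpha> r"
proof (cases "q = PEps")
  case True
  then show ?thesis using h by (simp only: odot.simps)
next
  case False
  then have e: "odot p q = PSeq p q" "odot p' q = PSeq p' q" using assms by (simp_all add: odot_seq)
  show ?thesis by (simp only: e seq_step h)
qed

lemma odot_act_iff: "bstep E (odot (PAct l) q) \<alpha> r \<longleftrightarrow> \<alpha> = l \<and> r = q"
proof (cases "q = PEps")
  case True
  then show ?thesis by (simp add: act_step)
next
  case False
  then show ?thesis by (simp add: odot_seq seq_step act_step)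
qed

lemma bsum_map_step: "xs \<noteq> [] \<Longrightarrow> bstep E (bsum (map f xs)) \<alpha> r \<longleftrightarrow> (\<exists>x\<in>set xs. bstep E (f x) \<alpha> r)"
  by (simp add: bsum_step)

locale tsys =
  fixes M :: "('v \<times> ('b, 'l, 'v) styp) set" and V :: "'v set"
    and E :: "'v \<Rightarrow> (('b, 'l, 'v) act, 'v) proc option"
  assumes hE: "(c, X) \<in> M \<Longrightarrow> E c = Some (tr V (unr X))"
    and hM: "(c, X) \<in> M \<Longrightarrow> c \<in> fv X \<and> cok X \<and> mus X \<subseteq> M"
begin

lemma L: "cok Y \<Longrightarrow> mus Y \<subseteq> M \<Longrightarrow> bstep E (tr V (unr Y)) \<alpha> r \<longleftrightarrow> bstep E (tr V Y) \<alpha> r"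
proof (induction Y arbitrary: \<alpha> r)
  case (SMu c k X)
  then have "(c, X) \<in> M" by auto
  then show ?case by (simp add: pvar_step hE)
next
  case (SSeq T U)
  show ?case
  proof (cases "terminated T")
    case True
    have "\<forall>(c, X)\<in>mus T. c \<in> fv X"
    proof (clarify)
      fix c X assume "(c, X) \<in> mus T"
      then have "(c, X) \<in> M" using SSeq.prems by auto
      then show "c \<in> fv X" using hM by blast
    qed
    then have "mus T = {}" using True term_mus[of T] by blast
    then have "tr V T = PEps" using True tr_eps by blast
    then show ?thesis using True SSeq by (simp add: unr_skip)
  next
    case False
    have "unr (SSeq T U) = SSeq (unr T) U" using False by (simp add: unr_skip)
    moreover have "tr V (unr T) \<noteq> PEps" using False SSeq.prems
      by (intro tr_noneps) (auto simp: term_unr cok_unr)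
    moreover have "tr V T \<noteq> PEps" using False SSeq.prems by (intro tr_noneps) auto
    moreover have "\<And>\<alpha> r. bstep E (tr V (unr T)) \<alpha> r \<longleftrightarrow> bstep E (tr V T) \<alpha> r"
      using SSeq by auto
    ultimately have "bstep E (odot (tr V (unr T)) (tr V U)) \<alpha> r \<longleftrightarrow> bstep E (odot (tr V T) (tr V U)) \<alpha> r"
      by (intro odot_step_cong)
    then show ?thesis using \<open>unr (SSeq T U) = SSeq (unr T) U\<close> by (simp only: tr.simps)
  qed
qed auto

lemma Lmu: "(c, X0) \<in> M \<Longrightarrow> bstep E (PVar c) \<alpha> r \<longleftrightarrow> bstep E (tr V X0) \<alpha> r"
  using L[of X0] hM[of c X0] hE[of c X0] by (simp add: pvar_step)

definition mok :: "'v \<Rightarrow> ('b, 'l, 'v) styp \<Rightarrow> bool" where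
  "mok c X \<longleftrightarrow> c \<in> V \<and> c \<in> fv X \<and> contractive c X \<and> (\<exists>X0. (c, X0) \<in> M \<and> tr V X = tr V X0)"

definition gd :: "('b, 'l, 'v) styp \<Rightarrow> bool" where
  "gd S \<longleftrightarrow> cok S \<and> fv S \<inter> V = {} \<and> (\<forall>(c, X) \<in> mus S. mok c X)"

lemma gd_seq: "gd (SSeq T U) \<longleftrightarrow> gd T \<and> gd U"
  unfolding gd_def by auto

lemma gd_skip: "gd SSkip"
  unfolding gd_def by simp

lemma gd_int: assumes "(k, T) \<in> set bs" "gd (SInt bs)" shows "gd T"
proof -
  have c: "cok T" using assms by (auto simp: gd_def)
  have "fv (snd (k, T)) \<subseteq> (\<Union>p\<in>set bs. fv (snd p))" using assms(1) by (rule UN_upper)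
  then have f: "fv T \<subseteq> fv (SInt bs)" by simp
  have "mus (snd (k, T)) \<subseteq> (\<Union>p\<in>set bs. mus (snd p))" using assms(1) by (rule UN_upper)
  then have m: "mus T \<subseteq> mus (SInt bs)" by simp
  show ?thesis using c f m assms(2) unfolding gd_def by blast
qed

lemma gd_ext: assumes "(k, T) \<in> set bs" "gd (SExt bs)" shows "gd T"
proof -
  have c: "cok T" using assms by (auto simp: gd_def)
  have "fv (snd (k, T)) \<subseteq> (\<Union>p\<in>set bs. fv (snd p))" using assms(1) by (rule UN_upper)
  then have f: "fv T \<subseteq> fv (SExt bs)" by simp
  have "mus (snd (k, T)) \<subseteq> (\<Union>p\<in>set bs. mus (snd p))" using assms(1) by (rule UN_upper)
  then have m: "mus T \<subseteq> mus (SExt bs)" by simp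
  show ?thesis using c f m assms(2) unfolding gd_def by blast
qed

lemma gd_mu_facts:
  assumes "gd (SMu a k T)"
  shows "a \<in> V" "a \<in> fv T" "contractive a T" "\<not> terminated (SMu a k T)"
    "tr V (SMu a k T) = PVar a" "\<exists>X0. (a, X0) \<in> M \<and> tr V T = tr V X0"
proof -
  have m: "mok a T" using assms unfolding gd_def by auto
  then show "a \<in> V" "a \<in> fv T" "contractive a T" "\<exists>X0. (a, X0) \<in> M \<and> tr V T = tr V X0"
    unfolding mok_def by auto
  show "\<not> terminated (SMu a k T)" using \<open>a \<in> fv T\<close> term_fv[of T] by auto
  show "tr V (SMu a k T) = PVar a" by simp
qed

lemma gd_subst: assumes g: "gd (SMu a k T)" shows "gd (subst a (SMu a k T) T)"
proof -
  let ?S = "SMu a k T"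
  note F = gd_mu_facts[OF g]
  have gc: "cok ?S" and gf: "fv ?S \<inter> V = {}" using g unfolding gd_def by auto
  have mS: "\<And>c X. (c, X) \<in> mus ?S \<Longrightarrow> mok c X" using g unfolding gd_def by auto
  have c: "cok (subst a ?S T)" using gc by (intro cok_subst) simp_all
  have "fv (subst a ?S T) \<subseteq> fv ?S" using fv_subst[of a ?S T] by simp
  then have f: "fv (subst a ?S T) \<inter> V = {}" using gf by blast
  have m: "mok c Y" if cY: "(c, Y) \<in> mus (subst a ?S T)" for c Y
  proof -
    from mus_subst[OF cY] show ?thesis
    proof (elim disjE exE conjE)
      assume "(c, Y) \<in> mus T" then have "(c, Y) \<in> mus ?S" by simp
      then show ?thesis by (rule mS)
    next
      assume "(c, Y) \<in> mus ?S" then show ?thesis by (rule mS)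
    next
      fix X assume 3: "(c, X) \<in> mus T" "c \<noteq> a" "Y = subst a ?S X"
      have "(c, X) \<in> mus ?S" using 3(1) by simp
      then have mX: "mok c X" by (rule mS)
      have cV: "c \<in> V" using mX unfolding mok_def by simp
      have "c \<notin> fv ?S" using cV gf by blast
      moreover have "\<forall>(b, X) \<in> mus ?S. contractive b X"
      proof (clarify)
        fix b Z assume "(b, Z) \<in> mus ?S"
        then have "mok b Z" by (rule mS)
        then show "contractive b Z" unfolding mok_def by simp
      qed
      ultimately have cS: "contractive c ?S" by (rule contr_nofv)
      have cX: "contractive c X" using mX unfolding mok_def by simp
      have h1: "contractive c Y" unfolding 3(3) using cX 3(2) cS F(4) by (rule contr_subst)
      have h2: "c \<in> fv Y"
      proof -
        have "c \<in> fv X" using mX unfolding mok_def by simp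
        then have "c \<in> fv X - {a}" using 3(2) by simp
        then show ?thesis unfolding 3(3) using fv_subst2[of X a ?S] by (rule subsetD[rotated])
      qed
      have h3: "\<exists>X0. (c, X0) \<in> M \<and> tr V Y = tr V X0"
      proof -
        have e: "tr V Y = tr V X" unfolding 3(3) using tr_subst[OF F(1) F(5)] by simp
        obtain X0 where x: "(c, X0) \<in> M" "tr V X = tr V X0" using mX unfolding mok_def by blast
        show ?thesis using x e by (intro exI[of _ X0]) simp
      qed
      show ?thesis unfolding mok_def using cV h1 h2 h3 by (intro conjI)
    qed
  qed
  have m': "\<forall>(c, Y) \<in> mus (subst a ?S T). mok c Y" using m by (intro ballI) (clarsimp)
  show ?thesis unfolding gd_def using c f m' by (intro conjI)
qed

lemma gd_step: "sstep S \<alpha> S' \<Longrightarrow> gd S \<Longrightarrow> gd S'"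
proof (induction rule: sstep.induct)
  case (s_int k T bs) then show ?case by (rule gd_int)
next
  case (s_ext k T bs) then show ?case by (rule gd_ext)
next
  case (s_mu a k T \<alpha> T') then show ?case using gd_subst by blast
qed (auto simp: gd_skip gd_seq)

lemma A: "sstep S \<alpha> S' \<Longrightarrow> gd S \<Longrightarrow> bstep E (tr V S) \<alpha> (tr V S')"
proof (induction rule: sstep.induct)
  case (s_out B) then show ?case by (simp add: b_act)
next
  case (s_in B) then show ?case by (simp add: b_act)
next
  case (s_int k T bs)
  then have "bs \<noteq> []" by auto
  then show ?case using s_int(1) by (simp add: bsum_map_step odot_act_iff; metis fst_conv snd_conv)
next
  case (s_ext k T bs)
  then have "bs \<noteq> []" by auto
  then show ?case using s_ext(1) by (simp add: bsum_map_step odot_act_iff; metis fst_conv snd_conv)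
next
  case (s_var b)
  then have "b \<notin> V" unfolding gd_def by auto
  then show ?case by (simp add: b_act)
next
  case (s_mu a k T \<alpha> T')
  note F = gd_mu_facts[OF s_mu.prems]
  have "bstep E (tr V (subst a (SMu a k T) T)) \<alpha> (tr V T')" using s_mu gd_subst by blast
  then have "bstep E (tr V T) \<alpha> (tr V T')" using tr_subst F(1) F(5) by metis
  then show ?case using F(6) Lmu by auto
next
  case (s_seq1 T \<alpha> T' U)
  then have st: "bstep E (tr V T) \<alpha> (tr V T')" by (simp add: gd_seq)
  then have ne: "tr V T \<noteq> PEps" using eps_step by metis
  show ?case
  proof (cases "tr V U = PEps")
    case True then show ?thesis using st by simp
  next
    case False
    then show ?thesis using st ne
      by (cases "tr V T' = PEps") (auto simp: odot_seq intro: b_seq1 b_seq2)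
  qed
next
  case (s_seq2 T U \<alpha> U')
  then have g: "gd T" "gd U" by (auto simp: gd_seq)
  have "mus T = {}" using term_mus[OF s_seq2(1)] g(1) unfolding gd_def mok_def by auto
  then have "tr V T = PEps" using s_seq2(1) tr_eps by blast
  then show ?case using s_seq2 g by simp
qed

lemma B: "\<forall>r. gd S \<longrightarrow> bstep E (tr V S) \<alpha> r \<longrightarrow> (\<exists>S'. sstep S \<alpha> S' \<and> tr V S' = r)"
proof (induction S rule: wf_induct[OF wf_inv_image[OF wf_lex_prod[OF wf_less_than wf_less_than]],
      of "\<lambda>S. (hdm S, size S)"])
  case (1 S)
  have IH: "\<exists>S'. sstep Y \<alpha> S' \<and> tr V S' = r"
    if "hdm Y < hdm S \<or> hdm Y = hdm S \<and> size Y < size S" "gd Y" "bstep E (tr V Y) \<alpha> r" for Y r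
    using 1 that by auto
  show ?case
  proof (intro allI impI)
    fix r assume g: "gd S" and st: "bstep E (tr V S) \<alpha> r"
    show "\<exists>S'. sstep S \<alpha> S' \<and> tr V S' = r"
    proof (cases S)
      case SSkip then show ?thesis using st eps_step by (metis tr.simps(1))
    next
      case (SOut B) then show ?thesis using st by (auto simp: act_step intro: s_out)
    next
      case (SIn B) then show ?thesis using st by (auto simp: act_step intro: s_in)
    next
      case (SVar b)
      then show ?thesis using st g by (auto simp: act_step gd_def intro: s_var)
    next
      case (SInt bs)
      then have "bs \<noteq> []" using g by (auto simp: gd_def)
      then obtain p where "p \<in> set bs" "\<alpha> = AInt (fst p)" "r = tr V (snd p)"
        using st SInt by (auto simp: bsum_map_step odot_act_iff)
      then show ?thesis using SInt by (metis prod.collapse s_int)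
    next
      case (SExt bs)
      then have "bs \<noteq> []" using g by (auto simp: gd_def)
      then obtain p where "p \<in> set bs" "\<alpha> = AExt (fst p)" "r = tr V (snd p)"
        using st SExt by (auto simp: bsum_map_step odot_act_iff)
      then show ?thesis using SExt by (metis prod.collapse s_ext)
    next
      case (SMu a k T)
      note F = gd_mu_facts[OF g[unfolded SMu]]
      obtain X0 where X0: "(a, X0) \<in> M" "tr V T = tr V X0" using F(6) by blast
      have "bstep E (tr V T) \<alpha> r" using st SMu X0 Lmu by auto
      then have st': "bstep E (tr V (subst a S T)) \<alpha> r" using tr_subst F(1) F(5) SMu by metis
      have "hdm (subst a S T) = hdm T" using hdm_subst F(3) F(4) SMu by metis
      then have "hdm (subst a S T) < hdm S" using SMu by simp
      moreover have "gd (subst a S T)" using gd_subst g SMu by blast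
      ultimately obtain S' where "sstep (subst a S T) \<alpha> S'" "tr V S' = r" using IH st' by blast
      then have "sstep (SMu a k T) \<alpha> S'" using SMu by (simp add: s_mu)
      then show ?thesis using \<open>tr V S' = r\<close> SMu by blast
    next
      case (SSeq T U)
      have gT: "gd T" and gU: "gd U" using g SSeq by (auto simp: gd_seq)
      have hT: "hdm T < hdm S \<or> hdm T = hdm S \<and> size T < size S" using SSeq by auto
      show ?thesis
      proof (cases "tr V U = PEps")
        case True
        then have "bstep E (tr V T) \<alpha> r" using st SSeq by simp
        then obtain T' where "sstep T \<alpha> T'" "tr V T' = r" using IH[OF hT gT] by blast
        then show ?thesis using True SSeq by (auto intro: s_seq1)
      next
        case nU: False
        show ?thesis
        proof (cases "tr V T = PEps")
          case True
          then have tT: "terminated T" using tr_noneps gT unfolding gd_def by blast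
          then have hU: "hdm U < hdm S \<or> hdm U = hdm S \<and> size U < size S" using SSeq by auto
          have "bstep E (tr V U) \<alpha> r" using st SSeq True by simp
          then obtain U' where "sstep U \<alpha> U'" "tr V U' = r" using IH[OF hU gU] by blast
          then show ?thesis using tT SSeq by (auto intro: s_seq2)
        next
          case nT: False
          then have "bstep E (PSeq (tr V T) (tr V U)) \<alpha> r" using st SSeq nU by (simp add: odot_seq)
          then consider p' where "bstep E (tr V T) \<alpha> p'" "p' \<noteq> PEps" "r = PSeq p' (tr V U)"
            | "bstep E (tr V T) \<alpha> PEps" "r = tr V U" by (auto simp: seq_step)
          then show ?thesis
          proof cases
            case 1
            then obtain T' where "sstep T \<alpha> T'" "tr V T' = p'" using IH[OF hT gT] by blast
            then show ?thesis using 1 nU SSeq by (auto intro: s_seq1 simp: odot_seq)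
          next
            case 2
            then obtain T' where "sstep T \<alpha> T'" "tr V T' = PEps" using IH[OF hT gT] by blast
            then show ?thesis using 2 SSeq by (auto intro: s_seq1)
          qed
        qed
      qed
    qed
  qed
qed

lemma bisim_iff: "gd T \<Longrightarrow> gd U \<Longrightarrow> type_bisim T U \<longleftrightarrow> bisimilar (bstep E) (tr V T) (tr V U)"
proof
  assume gT: "gd T" and gU: "gd U" and tb: "type_bisim T U"
  then obtain R where R: "is_bisim sstep R" "(T, U) \<in> R" unfolding type_bisim_def bisimilar_def by blast
  let ?R = "{(tr V S1, tr V S2) | S1 S2. (S1, S2) \<in> R \<and> gd S1 \<and> gd S2}"
  have "is_bisim (bstep E) ?R"
    unfolding is_bisim_def
  proof (intro ballI, clarify, intro conjI allI impI)
    fix S1 S2 a p' assume in1: "(S1, S2) \<in> R" "gd S1" "gd S2" and st: "bstep E (tr V S1) a p'"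
    obtain S1' where s1: "sstep S1 a S1'" "tr V S1' = p'" using B st in1 by blast
    obtain S2' where s2: "sstep S2 a S2'" "(S1', S2') \<in> R" using R(1) in1 s1 unfolding is_bisim_def by blast
    have b: "bstep E (tr V S2) a (tr V S2')" using A s2(1) in1(3) by blast
    have "gd S1'" "gd S2'" using gd_step s1(1) s2(1) in1 by blast+
    then have "(p', tr V S2') \<in> ?R" using s1(2) s2(2) by blast
    then show "\<exists>q'. bstep E (tr V S2) a q' \<and> (p', q') \<in> ?R" using b by blast
  next
    fix S1 S2 a q' assume in1: "(S1, S2) \<in> R" "gd S1" "gd S2" and st: "bstep E (tr V S2) a q'"
    obtain S2' where s2: "sstep S2 a S2'" "tr V S2' = q'" using B st in1 by blast
    obtain S1' where s1: "sstep S1 a S1'" "(S1', S2') \<in> R" using R(1) in1 s2 unfolding is_bisim_def by blast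
    have b: "bstep E (tr V S1) a (tr V S1')" using A s1(1) in1(2) by blast
    have "gd S1'" "gd S2'" using gd_step s1(1) s2(1) in1 by blast+
    then have "(tr V S1', q') \<in> ?R" using s1(2) s2(2) by blast
    then show "\<exists>p'. bstep E (tr V S1) a p' \<and> (p', q') \<in> ?R" using b by blast
  qed
  then show "bisimilar (bstep E) (tr V T) (tr V U)" unfolding bisimilar_def using R(2) gT gU by blast
next
  assume gT: "gd T" and gU: "gd U" and bb: "bisimilar (bstep E) (tr V T) (tr V U)"
  then obtain R where R: "is_bisim (bstep E) R" "(tr V T, tr V U) \<in> R" unfolding bisimilar_def by blast
  let ?R = "{(S1, S2). (tr V S1, tr V S2) \<in> R \<and> gd S1 \<and> gd S2}"
  have "is_bisim sstep ?R"
    unfolding is_bisim_def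
  proof (intro ballI, clarify, intro conjI allI impI)
    fix S1 S2 a S1' assume in1: "(tr V S1, tr V S2) \<in> R" "gd S1" "gd S2" and st: "sstep S1 a S1'"
    have b1: "bstep E (tr V S1) a (tr V S1')" using A st in1 by blast
    obtain q' where q: "bstep E (tr V S2) a q'" "(tr V S1', q') \<in> R" using R(1) in1 b1 unfolding is_bisim_def by blast
    obtain S2' where s2: "sstep S2 a S2'" "tr V S2' = q'" using B q in1 by blast
    have "gd S1'" "gd S2'" using gd_step st s2(1) in1 by blast+
    then show "\<exists>S2'. sstep S2 a S2' \<and> (S1', S2') \<in> ?R" using s2 q by auto
  next
    fix S1 S2 a S2' assume in1: "(tr V S1, tr V S2) \<in> R" "gd S1" "gd S2" and st: "sstep S2 a S2'"
    have b2: "bstep E (tr V S2) a (tr V S2')" using A st in1 by blast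
    obtain p' where p: "bstep E (tr V S1) a p'" "(p', tr V S2') \<in> R" using R(1) in1 b2 unfolding is_bisim_def by blast
    obtain S1' where s1: "sstep S1 a S1'" "tr V S1' = p'" using B p in1 by blast
    have "gd S1'" "gd S2'" using gd_step st s1(1) in1 by blast+
    then show "\<exists>S1'. sstep S1 a S1' \<and> (S1', S2') \<in> ?R" using s1 p by auto
  qed
  then show "type_bisim T U" unfolding type_bisim_def bisimilar_def using R(2) gT gU by blast
qed

end

lemma kind_props: "kinding \<Delta> T \<kappa> \<Longrightarrow> cok T \<and> (\<forall>(c, X) \<in> mus T. contractive c X)"
proof (induction rule: kinding.induct)
  case (k_int bs \<Delta>)
  then show ?case by (fastforce)
next
  case (k_ext bs \<Delta>)
  then show ?case by (fastforce)
qed auto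

lemma mus_binders: "(c, X) \<in> mus T \<Longrightarrow> c \<in> set (binders T)"
proof (induction T)
  case (SInt x) then show ?case by (force simp: snds_snd)
next
  case (SExt x) then show ?case by (force simp: snds_snd)
qed auto

lemma mus_sub: "(c, X) \<in> mus T \<Longrightarrow> mus X \<subseteq> mus T"
proof (induction T)
  case (SInt x) then show ?case by (force simp: snds_snd)
next
  case (SExt x) then show ?case by (force simp: snds_snd)
qed auto

lemma mus_cok: "cok T \<Longrightarrow> (c, X) \<in> mus T \<Longrightarrow> cok X"
proof (induction T)
  case (SInt x) then show ?case by (force simp: snds_snd)
next
  case (SExt x) then show ?case by (force simp: snds_snd)
qed auto

lemma uniq_list:
  assumes IH: "\<And>p. p \<in> set bs \<Longrightarrow> distinct (binders (snd p)) \<Longrightarrow> (c, X) \<in> mus (snd p) \<Longrightarrow> (c, Y) \<in> mus (snd p) \<Longrightarrow> X = Y"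
    and d: "distinct (concat (map (\<lambda>p. binders (snd p)) bs))"
    and x: "(c, X) \<in> (\<Union>p\<in>set bs. mus (snd p))" and y: "(c, Y) \<in> (\<Union>p\<in>set bs. mus (snd p))"
  shows "X = Y"
  using IH d x y
proof (induction bs)
  case Nil then show ?case by simp
next
  case (Cons q bs)
  have d1: "distinct (binders (snd q))" and d2: "distinct (concat (map (\<lambda>p. binders (snd p)) bs))"
    and dj: "set (binders (snd q)) \<inter> set (concat (map (\<lambda>p. binders (snd p)) bs)) = {}"
    using Cons.prems(2) by auto
  have IH': "\<And>p. p \<in> set bs \<Longrightarrow> distinct (binders (snd p)) \<Longrightarrow> (c, X) \<in> mus (snd p) \<Longrightarrow> (c, Y) \<in> mus (snd p) \<Longrightarrow> X = Y"
    using Cons.prems(1) by auto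
  have nb: "c \<notin> set (binders (snd q))" if "(c, Z) \<in> (\<Union>p\<in>set bs. mus (snd p))" for Z
  proof -
    from that obtain p where "p \<in> set bs" "(c, Z) \<in> mus (snd p)" by auto
    then have "c \<in> set (concat (map (\<lambda>p. binders (snd p)) bs))" using mus_binders by fastforce
    then show ?thesis using dj by blast
  qed
  show ?case
  proof (cases "(c, X) \<in> mus (snd q)")
    case cx: True
    show ?thesis
    proof (cases "(c, Y) \<in> mus (snd q)")
      case True then show ?thesis using Cons.prems(1)[of q] cx d1 by simp
    next
      case False
      then have "(c, Y) \<in> (\<Union>p\<in>set bs. mus (snd p))" using Cons.prems(4) by auto
      then show ?thesis using nb mus_binders[OF cx] by (metis)
    qed
  next
    case cx: False
    then have X': "(c, X) \<in> (\<Union>p\<in>set bs. mus (snd p))" using Cons.prems(3) by auto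
    show ?thesis
    proof (cases "(c, Y) \<in> mus (snd q)")
      case True then show ?thesis using nb[OF X'] mus_binders[OF True] by (metis)
    next
      case False
      then have "(c, Y) \<in> (\<Union>p\<in>set bs. mus (snd p))" using Cons.prems(4) by auto
      then show ?thesis
      proof (rule Cons.IH[rotated 3])
        show "\<And>p. p \<in> set bs \<Longrightarrow> distinct (binders (snd p)) \<Longrightarrow> (c, X) \<in> mus (snd p) \<Longrightarrow> (c, Y) \<in> mus (snd p) \<Longrightarrow> X = Y"
          by (rule IH')
      qed (fact d2 X')+
    qed
  qed
qed

lemma mus_uniq: "distinct (binders T) \<Longrightarrow> (c, X) \<in> mus T \<Longrightarrow> (c, Y) \<in> mus T \<Longrightarrow> X = Y"
proof (induction T)
  case (SInt x)
  show ?case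
    by (rule uniq_list[of x c X Y]) (use SInt snds_snd in auto)
next
  case (SExt x)
  show ?case
    by (rule uniq_list[of x c X Y]) (use SExt snds_snd in auto)
next
  case (SSeq T U)
  then show ?case by (auto dest: mus_binders)
next
  case (SMu a k T)
  then show ?case by (auto dest: mus_binders)
qed auto

theorem mainTheorem6:
  fixes T U :: "('b, 'l, 'v) styp" and \<Delta> :: "'v \<Rightarrow> kind option" and m :: kind
  assumes "kinding \<Delta> T m" and "kinding \<Delta> U m" and "standing T U"
  defines "V \<equiv> set (binders T @ binders U)"
  shows "type_bisim T U \<longleftrightarrow>
    (\<exists>Estar. (\<forall>(X, p) \<in> eqs V T \<union> eqs V U. Estar X = Some p) \<and>
             bisimilar (bstep Estar) (tr V T) (tr V U))"
proof -
  define M where "M = mus T \<union> mus U"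
  have KT: "cok T" "\<forall>(c, X) \<in> mus T. contractive c X" using kind_props[OF assms(1)] by auto
  have KU: "cok U" "\<forall>(c, X) \<in> mus U. contractive c X" using kind_props[OF assms(2)] by auto
  have st1: "\<forall>(a, B) \<in> M. a \<in> fv B" and st2: "distinct (binders T @ binders U)"
    and st3: "V \<inter> (fv T \<union> fv U) = {}"
    using assms(3) unfolding standing_def M_def V_def by auto
  have MV: "c \<in> V" if "(c, X) \<in> M" for c X
    using that mus_binders unfolding M_def V_def by fastforce
  have Mcontr: "contractive c X" if "(c, X) \<in> M" for c X
    using that KT KU unfolding M_def by auto
  have hM: "c \<in> fv X \<and> cok X \<and> mus X \<subseteq> M" if cM: "(c, X) \<in> M" for c X
  proof (intro conjI)
    show "c \<in> fv X" using st1 cM by auto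
    show "cok X"
    proof (cases "(c, X) \<in> mus T")
      case True then show ?thesis using mus_cok[OF KT(1)] by blast
    next
      case False then have "(c, X) \<in> mus U" using cM unfolding M_def by blast
      then show ?thesis using mus_cok[OF KU(1)] by blast
    qed
    show "mus X \<subseteq> M"
    proof (cases "(c, X) \<in> mus T")
      case True then show ?thesis using mus_sub[OF True] unfolding M_def by blast
    next
      case False then have "(c, X) \<in> mus U" using cM unfolding M_def by blast
      then show ?thesis using mus_sub[of c X U] unfolding M_def by blast
    qed
  qed
  have dT: "distinct (binders T)" and dU: "distinct (binders U)"
    and dj: "set (binders T) \<inter> set (binders U) = {}" using st2 by auto
  have uniq: "X = Y" if x: "(c, X) \<in> M" and y: "(c, Y) \<in> M" for c X Y
  proof (cases "(c, X) \<in> mus T")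
    case xT: True
    then have cT: "c \<in> set (binders T)" by (rule mus_binders)
    have "(c, Y) \<in> mus T"
    proof (rule ccontr)
      assume "(c, Y) \<notin> mus T"
      then have "(c, Y) \<in> mus U" using y unfolding M_def by blast
      then have "c \<in> set (binders U)" by (rule mus_binders)
      then show False using cT dj by blast
    qed
    then show ?thesis using mus_uniq[OF dT xT] by blast
  next
    case False
    then have xU: "(c, X) \<in> mus U" using x unfolding M_def by blast
    then have cU: "c \<in> set (binders U)" by (rule mus_binders)
    have "(c, Y) \<in> mus U"
    proof (rule ccontr)
      assume "(c, Y) \<notin> mus U"
      then have "(c, Y) \<in> mus T" using y unfolding M_def by blast
      then have "c \<in> set (binders T)" by (rule mus_binders)
      then show False using cU dj by blast
    qed
    then show ?thesis using mus_uniq[OF dU xU] by blast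
  qed
  have eqs1: "E c = Some (tr V (unr X))"
    if e: "\<forall>(X, p) \<in> eqs V T \<union> eqs V U. E X = Some p" and cM: "(c, X) \<in> M" for E c X
  proof -
    have "(c, tr V (unr X)) \<in> eqs V T \<union> eqs V U" using cM unfolding eqs_def M_def by blast
    then show ?thesis using e by blast
  qed
  have eqs2: "\<forall>(X, p) \<in> eqs V T \<union> eqs V U. E X = Some p"
    if h: "\<And>c X. (c, X) \<in> M \<Longrightarrow> E c = Some (tr V (unr X))" for E
  proof (clarify)
    fix c p assume "(c, p) \<in> eqs V T \<union> eqs V U"
    then obtain B where "(c, B) \<in> M" "p = tr V (unr B)" unfolding eqs_def M_def by blast
    then show "E c = Some p" using h by simp
  qed
  have bis: "type_bisim T U \<longleftrightarrow> bisimilar (bstep E) (tr V T) (tr V U)"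
    if hE: "\<And>c X. (c, X) \<in> M \<Longrightarrow> E c = Some (tr V (unr X))" for E
  proof -
    interpret tsys M V E
      by unfold_locales (use hE hM in auto)
    have gd_main: "gd S" if "S = T \<or> S = U" for S
    proof -
      have "cok S" using that KT KU by auto
      moreover have "fv S \<inter> V = {}" using that st3 by auto
      moreover have "\<forall>(c, X) \<in> mus S. mok c X"
      proof (clarify)
        fix c X assume "(c, X) \<in> mus S"
        then have cM: "(c, X) \<in> M" using that unfolding M_def by auto
        then show "mok c X" unfolding mok_def
          using MV[OF cM] hM[OF cM] Mcontr[OF cM] by blast
      qed
      ultimately show ?thesis unfolding gd_def by blast
    qed
    show ?thesis using bisim_iff gd_main by blast
  qed
  show ?thesis
  proof
    assume tb: "type_bisim T U"
    define E where "E c = (if \<exists>X. (c, X) \<in> M then Some (tr V (unr (SOME X. (c, X) \<in> M))) else None)" for c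
    have hE: "E c = Some (tr V (unr X))" if "(c, X) \<in> M" for c X
    proof -
      have "(c, SOME X. (c, X) \<in> M) \<in> M" using that by (rule someI)
      then have "(SOME X. (c, X) \<in> M) = X" using uniq that by blast
      then show ?thesis unfolding E_def using that by auto
    qed
    have bE: "type_bisim T U \<longleftrightarrow> bisimilar (bstep E) (tr V T) (tr V U)"
      by (rule bis) (rule hE)
    have "bisimilar (bstep E) (tr V T) (tr V U)" using bE tb by blast
    moreover have "\<forall>(X, p) \<in> eqs V T \<union> eqs V U. E X = Some p" using eqs2 hE by blast
    ultimately show "\<exists>Estar. (\<forall>(X, p) \<in> eqs V T \<union> eqs V U. Estar X = Some p) \<and>
             bisimilar (bstep Estar) (tr V T) (tr V U)" by blast
  next
    assume "\<exists>Estar. (\<forall>(X, p) \<in> eqs V T \<union> eqs V U. Estar X = Some p) \<and>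
             bisimilar (bstep Estar) (tr V T) (tr V U)"
    then obtain E where e: "\<forall>(X, p) \<in> eqs V T \<union> eqs V U. E X = Some p"
      and b: "bisimilar (bstep E) (tr V T) (tr V U)" by blast
    have bE: "type_bisim T U \<longleftrightarrow> bisimilar (bstep E) (tr V T) (tr V U)"
      by (rule bis) (rule eqs1[OF e])
    then show "type_bisim T U" using b by blast
  qed
qed

end
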